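(* For all $a,b\in[0,\infty]$ with $a\leq b$, there exist sequences $(\ell_p)_{p=1}^\infty$ and $(\gamma_p)_{p=1}^\infty$ of positive reals such that: (a) $\lim_{p\to\infty}\gamma_{2p+1}=a$ and $\lim_{p\to\infty}\gamma_{2p}=b$; (b) $\lim_{p\to\infty}(\ell_{p+1}-\ell_p)=\infty$; (c) $\lim_{p\to\infty}\ell_p/e^{\gamma_p\ell_p}=0$; (d) $\limsup_{p\to\infty}\gamma_{p+1}\ell_{p+1}/\ell_p\leq b$; (e) $\gamma_p\ell_p+1\leq\gamma_{p+1}\ell_{p+1}$ for all $p\in\mathbb N$; (f) for every constant $c\geq0$, $\lim_{p\to\infty}\big(cp+\sum_{j=1}^p\ell_j\big)/e^{\gamma_p\ell_p}=0$. *)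

theory Defs
  imports "HOL-Analysis.Analysis"
begin

end

theory Submission
  imports Defs "HOL-Real_Asymp.Real_Asymp"
begin

definition good :: "ereal \<Rightarrow> ereal \<Rightarrow> (nat \<Rightarrow> real) \<Rightarrow> (nat \<Rightarrow> real) \<Rightarrow> bool" where
 "good a b l g \<longleftrightarrow>
    (\<forall>p\<ge>1. l p > 0 \<and> g p > 0) \<and>
    ((\<lambda>p. ereal (g (2*p+1))) \<longlonglongrightarrow> a) \<and>
    ((\<lambda>p. ereal (g (2*p))) \<longlonglongrightarrow> b) \<and>
    filterlim (\<lambda>p. l (Suc p) - l p) at_top sequentially \<and>
    ((\<lambda>p. l p / exp (g p * l p)) \<longlonglongrightarrow> 0) \<and>
    limsup (\<lambda>p. ereal (g (Suc p) * l (Suc p) / l p)) \<le> b \<and>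
    (\<forall>p\<ge>1. g p * l p + 1 \<le> g (Suc p) * l (Suc p)) \<and>
    (\<forall>c::real. c \<ge> 0 \<longrightarrow>
       ((\<lambda>p. (c * real p + (\<Sum>j=1..p. l j)) / exp (g p * l p)) \<longlonglongrightarrow> 0))"

lemma my_seq_even_odd:
  assumes E: "eventually (\<lambda>n. P (2 * n)) sequentially" and O: "eventually (\<lambda>n. P (2 * n + 1)) sequentially"
  shows "eventually P sequentially"
proof -
  from E obtain n_e where [intro]: "\<And>n. n \<ge> n_e \<Longrightarrow> P (2 * n)"
    by (auto simp: eventually_sequentially)
  moreover
  from O obtain n_o where [intro]: "\<And>n. n \<ge> n_o \<Longrightarrow> P (Suc (2 * n))"
    by (auto simp: eventually_sequentially)
  show ?thesis
    unfolding eventually_sequentially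
  proof (intro exI allI impI)
    fix n assume "max (2 * n_e) (2 * n_o + 1) \<le> n" then show "P n"
      by (cases "even n") (auto elim!: evenE oddE )
  qed
qed

lemma my_limseq_even_odd:
  assumes "(\<lambda>n. f (2 * n)) \<longlonglongrightarrow> (l :: 'a :: topological_space)"
      and "(\<lambda>n. f (2 * n + 1)) \<longlonglongrightarrow> l"
  shows "f \<longlonglongrightarrow> l"
  using assms by (auto simp: filterlim_iff intro: my_seq_even_odd)

lemma parity_cases:
  fixes p :: nat
  obtains k where "p = 2*k" | k where "p = 2*k+1"
  by (metis oddE evenE)

lemma cf_gen:
  fixes l x U V :: "nat \<Rightarrow> real"
  assumes l0: "\<And>j. 1 \<le> j \<Longrightarrow> 0 \<le> l j"
    and lU: "\<And>j p. 1 \<le> j \<Longrightarrow> j \<le> p \<Longrightarrow> l j \<le> U p"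
    and Vx: "\<And>p. 1 \<le> p \<Longrightarrow> V p \<le> x p"
    and lim: "\<And>c. c \<ge> 0 \<Longrightarrow> (\<lambda>p. (c*real p + real p * U p)/exp(V p)) \<longlonglongrightarrow> 0"
  shows cf_gen2: "\<And>c. c \<ge> 0 \<Longrightarrow> (\<lambda>p. (c * real p + (\<Sum>j=1..p. l j)) / exp (x p)) \<longlonglongrightarrow> 0"
    and cf_gen1: "(\<lambda>p. l p / exp (x p)) \<longlonglongrightarrow> 0"
proof -
  fix c :: real assume c: "c \<ge> 0"
  show "(\<lambda>p. (c * real p + (\<Sum>j=1..p. l j)) / exp (x p)) \<longlonglongrightarrow> 0"
  proof (rule tendsto_sandwich[OF _ _ tendsto_const lim[OF c]])
    have "0 \<le> (c * real p + (\<Sum>j=1..p. l j)) / exp (x p)" for p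
      using c l0 by (intro divide_nonneg_pos add_nonneg_nonneg sum_nonneg) auto
    then show "\<forall>\<^sub>F p in sequentially. 0 \<le> (c * real p + (\<Sum>j=1..p. l j)) / exp (x p)" by simp
    have "(c * real p + (\<Sum>j=1..p. l j)) / exp (x p) \<le> (c*real p + real p * U p)/exp(V p)" if p: "p \<ge> 1" for p
    proof (rule frac_le)
      have "(\<Sum>j=1..p. l j) \<le> of_nat (card {1..p}) * U p"
        by (rule sum_bounded_above) (use lU in auto)
      then show le: "c * real p + (\<Sum>j=1..p. l j) \<le> c*real p + real p * U p" by simp
      have "0 \<le> (\<Sum>j=1..p. l j)" using l0 by (intro sum_nonneg) auto
      then show "0 \<le> c*real p + real p * U p"
        using le mult_nonneg_nonneg[OF c, of "real p"] by linarith
      show "0 < exp (V p)" by simp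
      show "exp (V p) \<le> exp (x p)" using Vx[OF p] by simp
    qed
    then show "\<forall>\<^sub>F p in sequentially. (c * real p + (\<Sum>j=1..p. l j)) / exp (x p) \<le> (c*real p + real p * U p)/exp(V p)"
      unfolding eventually_sequentially by blast
  qed
next
  have L: "(\<lambda>p. (0 * real p + (\<Sum>j=1..p. l j)) / exp (x p)) \<longlonglongrightarrow> 0"
  proof (rule tendsto_sandwich[OF _ _ tendsto_const lim[of 0]])
    have "0 \<le> (0 * real p + (\<Sum>j=1..p. l j)) / exp (x p)" for p
      using l0 by (intro divide_nonneg_pos add_nonneg_nonneg sum_nonneg) auto
    then show "\<forall>\<^sub>F p in sequentially. 0 \<le> (0 * real p + (\<Sum>j=1..p. l j)) / exp (x p)" by simp
    have "(0 * real p + (\<Sum>j=1..p. l j)) / exp (x p) \<le> (0*real p + real p * U p)/exp(V p)" if p: "p \<ge> 1" for p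
    proof (rule frac_le)
      have "(\<Sum>j=1..p. l j) \<le> of_nat (card {1..p}) * U p"
        by (rule sum_bounded_above) (use lU in auto)
      then show le: "0 * real p + (\<Sum>j=1..p. l j) \<le> 0*real p + real p * U p" by simp
      have "0 \<le> (\<Sum>j=1..p. l j)" using l0 by (intro sum_nonneg) auto
      then show "0 \<le> 0*real p + real p * U p"
        using le by simp
      show "0 < exp (V p)" by simp
      show "exp (V p) \<le> exp (x p)" using Vx[OF p] by simp
    qed
    then show "\<forall>\<^sub>F p in sequentially. (0 * real p + (\<Sum>j=1..p. l j)) / exp (x p) \<le> (0*real p + real p * U p)/exp(V p)"
      unfolding eventually_sequentially by blast
  qed simp
  show "(\<lambda>p. l p / exp (x p)) \<longlonglongrightarrow> 0"
  proof (rule tendsto_sandwich[OF _ _ tendsto_const L])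
    show "\<forall>\<^sub>F p in sequentially. 0 \<le> l p / exp (x p)"
      unfolding eventually_sequentially using l0 by (intro exI[of _ 1]) auto
    have "l p / exp (x p) \<le> (0 * real p + (\<Sum>j=1..p. l j)) / exp (x p)" if "p \<ge> 1" for p
    proof -
      have "l p \<le> (\<Sum>j=1..p. l j)" by (rule member_le_sum) (use that l0 in auto)
      then show ?thesis by (intro divide_right_mono) auto
    qed
    then show "\<forall>\<^sub>F p in sequentially. l p / exp (x p) \<le> (0 * real p + (\<Sum>j=1..p. l j)) / exp (x p)"
      unfolding eventually_sequentially by blast
  qed
qed

lemma gap: fixes E E' k :: real
  assumes "1 \<le> E" "0 \<le> k" "E*(2*k+6) \<le> E'" shows "k \<le> E' - (k+1) - E"
proof -
  have "1*(2*k+5) \<le> E*(2*k+5)" using assms by (intro mult_right_mono) auto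
  then show ?thesis using assms(3) by (simp add: algebra_simps)
qed

lemma half_le: fixes x y b :: real assumes "x \<le> 2*y" "0 \<le> b" shows "(b + x)/2 \<le> b + y"
  using assms by (simp add: field_simps)

lemma le_aux: fixes x Q R y :: real
  assumes "x \<le> Q" "1 \<le> R" "0 \<le> Q" "y = R*Q" shows "x \<le> y"
proof -
  have "x \<le> 1*Q" using assms(1) by simp
  also have "\<dots> \<le> R*Q" by (rule mult_right_mono) (use assms in auto)
  finally show ?thesis using assms(4) by simp
qed

lemma cancel_aux: fixes R Q P b :: real
  assumes "R \<noteq> 0" "b \<noteq> 0" "P \<noteq> 0" shows "R*Q/(R*P/b) = b*(Q/P)"
  using assms by (simp add: field_simps)

lemma step_ineq:
  fixes \<alpha> \<alpha>' E E' :: real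
  assumes "\<alpha>/2 \<le> \<alpha>'" "4*E \<le> E'" "2 \<le> \<alpha>*E" "0<\<alpha>" "0 \<le> E"
  shows "\<alpha>*E + 2 \<le> \<alpha>'*E'"
proof -
  have "(\<alpha>/2)*(4*E) \<le> \<alpha>'*E'" using assms by (intro mult_mono) auto
  moreover have "(\<alpha>/2)*(4*E) = 2*(\<alpha>*E)" by simp
  ultimately show ?thesis using assms(3) by linarith
qed

lemma exp_sq_ge: "real k + 1 \<le> exp ((2*real k+1)^2) / 2"
proof -
  have "1 + (2*real k+1)^2 \<le> exp ((2*real k+1)^2)" by (rule exp_ge_add_one_self)
  moreover have "2*(real k + 1) \<le> 1 + (2*real k+1)^2" by (simp add: power2_eq_square algebra_simps)
  ultimately have "2*(real k + 1) \<le> exp ((2*real k+1)^2)" by linarith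
  then show ?thesis by simp
qed

lemma caseAB:
  fixes \<alpha> :: "nat \<Rightarrow> real" and a :: ereal
  assumes \<alpha>1: "\<And>k. 1/(real k+1) \<le> \<alpha> k" and \<alpha>2: "\<And>k. \<alpha> k / 2 \<le> \<alpha> (Suc k)"
    and \<alpha>lim: "(\<lambda>k. ereal (\<alpha> k)) \<longlonglongrightarrow> a"
  shows "\<exists>l g. good a \<infinity> l g"
proof -
  define l where "l = (\<lambda>p::nat. exp ((real p)^2))"
  define g where "g = (\<lambda>p::nat. if even p then (\<alpha> (p div 2) * exp ((real p+1)^2) - 1) / exp ((real p)^2) else \<alpha> (p div 2))"
  have \<alpha>pos: "\<alpha> k > 0" for k using \<alpha>1[of k] by (smt (verit) divide_pos_pos of_nat_0_le_iff)
  have lowE: "exp y / (real k + 1) \<le> \<alpha> k * exp y" for k y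
    using mult_right_mono[OF \<alpha>1[of k], of "exp y"] by simp
  have big: "2 \<le> \<alpha> k * exp ((2*real k+1)^2)" for k
  proof -
    have "2 \<le> exp ((2*real k+1)^2) / (real k + 1)"
      using exp_sq_ge[of k] by (simp add: field_simps)
    then show ?thesis using lowE[of "(2*real k+1)^2" k] by linarith
  qed
  have xe: "g (2*k) * l (2*k) = \<alpha> k * exp ((2*real k+1)^2) - 1" for k
    by (simp add: g_def l_def)
  have xo: "g (2*k+1) * l (2*k+1) = \<alpha> k * exp ((2*real k+1)^2)" for k
    by (simp add: g_def l_def)
  have lpos: "l p > 0" for p by (simp add: l_def)
  have gpos: "g p > 0" for p
  proof (cases p rule: parity_cases)
    case (1 k)
    have "g (2*k) * l (2*k) > 0" unfolding xe using big[of k] by simp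
    then show ?thesis using 1 lpos[of "2*k"] by (simp add: zero_less_mult_iff)
  next
    case (2 k) then show ?thesis using \<alpha>pos[of k] by (simp add: g_def)
  qed
  have A1: "(\<lambda>p. ereal (g (2*p+1))) \<longlonglongrightarrow> a"
    using \<alpha>lim by (simp add: g_def)
  have A2: "(\<lambda>p. ereal (g (2*p))) \<longlonglongrightarrow> \<infinity>"
    unfolding tendsto_PInfty_eq_at_top
  proof (rule filterlim_at_top_mono)
    show "filterlim (\<lambda>k::nat. exp ((2*real k+1)^2)/((real k+1)*exp ((2*real k)^2)) - 1/exp ((2*real k)^2)) at_top sequentially"
      by real_asymp
    have "exp ((2*real k+1)^2)/((real k+1)*exp ((2*real k)^2)) - 1/exp ((2*real k)^2) \<le> g (2*k)" for k
    proof -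
      have "g (2*k) = (\<alpha> k * exp ((2*real k+1)^2) - 1) / exp ((2*real k)^2)"
        by (simp add: g_def)
      also have "\<dots> \<ge> (exp ((2*real k+1)^2)/(real k + 1) - 1) / exp ((2*real k)^2)"
        using lowE[of "(2*real k+1)^2" k] by (intro divide_right_mono) auto
      finally show ?thesis by (simp add: diff_divide_distrib)
    qed
    then show "\<forall>\<^sub>F k in sequentially. exp ((2*real k+1)^2)/((real k+1)*exp ((2*real k)^2)) - 1/exp ((2*real k)^2) \<le> g (2*k)"
      by simp
  qed
  have B: "filterlim (\<lambda>p. l (Suc p) - l p) at_top sequentially"
    unfolding l_def by real_asymp
  have E: "g p * l p + 1 \<le> g (Suc p) * l (Suc p)" for p
  proof (cases p rule: parity_cases)
    case (1 k)
    have "Suc (2*k) = 2*k+1" by simp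
    then show ?thesis using 1 xe[of k] xo[of k] by simp
  next
    case (2 k)
    have S: "Suc p = 2*(Suc k)" using 2 by simp
    have "exp ((2*real (Suc k)+1)^2) = exp ((2*real k+1)^2) * exp (8*real k + 8)"
      by (simp add: exp_add[symmetric] power2_eq_square algebra_simps)
    moreover have "4 \<le> exp (8*real k + 8)"
      using exp_ge_add_one_self[of "8*real k + 8"] by linarith
    ultimately have "4 * exp ((2*real k+1)^2) \<le> exp ((2*real (Suc k)+1)^2)"
      by simp
    then have "\<alpha> k * exp ((2*real k+1)^2) + 2 \<le> \<alpha> (Suc k) * exp ((2*real (Suc k)+1)^2)"
      by (intro step_ineq \<alpha>2 big \<alpha>pos) auto
    moreover have "g (Suc p) * l (Suc p) = \<alpha> (Suc k) * exp ((2*real (Suc k)+1)^2) - 1"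
      by (simp only: S xe)
    moreover have "g p * l p = \<alpha> k * exp ((2*real k+1)^2)" using 2 xo by simp
    ultimately show ?thesis by linarith
  qed
  have CF: "(\<lambda>p. l p / exp (g p * l p)) \<longlonglongrightarrow> 0 \<and> (\<forall>c::real. c \<ge> 0 \<longrightarrow>
       ((\<lambda>p. (c * real p + (\<Sum>j=1..p. l j)) / exp (g p * l p)) \<longlonglongrightarrow> 0))"
  proof (intro conjI allI impI)
    have l0: "\<And>j. 1 \<le> j \<Longrightarrow> 0 \<le> l j" using lpos less_imp_le by blast
    have lU: "\<And>j p. 1 \<le> j \<Longrightarrow> j \<le> p \<Longrightarrow> l j \<le> l p"
      unfolding l_def by (simp add: power_mono)
    have Vx: "exp ((real p)^2) / (real p + 1) - 1 \<le> g p * l p" if "1 \<le> p" for p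
    proof (cases p rule: parity_cases)
      case (1 k)
      have "(real p)^2 \<le> (2*real k+1)^2" using 1 by (simp add: power2_eq_square algebra_simps)
      then have "exp ((real p)^2) / (real p + 1) \<le> exp ((2*real k+1)^2) / (real k + 1)"
        using 1 by (intro frac_le) auto
      then show ?thesis using 1 xe[of k] lowE[of "(2*real k+1)^2" k] by simp
    next
      case (2 k)
      have "exp ((real p)^2) / (real p + 1) \<le> exp ((2*real k+1)^2) / (real k + 1)"
        using 2 by (intro frac_le) auto
      then show ?thesis using 2 xo[of k] lowE[of "(2*real k+1)^2" k] by simp
    qed
    have lim: "\<And>c. c \<ge> 0 \<Longrightarrow> (\<lambda>p. (c*real p + real p * l p)/exp(exp ((real p)^2) / (real p + 1) - 1)) \<longlonglongrightarrow> 0"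
      unfolding l_def by real_asymp
    show "(\<lambda>p. l p / exp (g p * l p)) \<longlonglongrightarrow> 0"
      by (rule cf_gen1[OF l0 lU Vx lim])
    fix c :: real assume c: "c \<ge> 0"
    show "(\<lambda>p. (c * real p + (\<Sum>j=1..p. l j)) / exp (g p * l p)) \<longlonglongrightarrow> 0"
      using cf_gen2[OF l0 lU Vx lim c] by simp
  qed
  have "good a \<infinity> l g"
    unfolding good_def using lpos gpos A1 A2 B E CF by simp
  then show ?thesis by blast
qed

lemma caseC:
  fixes b0 :: real
  assumes b0: "0 \<le> b0"
  shows "\<exists>l g. good 0 (ereal b0) l g"
proof -
  define \<beta> where "\<beta> = (\<lambda>k::nat. b0 + 1/(real k+1))"
  define l where "l = (\<lambda>p::nat. if even p then exp ((real (p div 2)+2)^2) else exp ((real (p div 2)+3)^2) - (real (p div 2)+1))"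
  define g where "g = (\<lambda>p::nat. if even p then \<beta> (p div 2) else (\<beta> (p div 2) * exp ((real (p div 2)+2)^2) + 1) / l p)"
  have le: "l (2*k) = exp ((real k+2)^2)" for k by (simp add: l_def)
  have lo: "l (2*k+1) = exp ((real k+3)^2) - (real k+1)" for k by (simp add: l_def)
  have expbig: "2*(real k+1) \<le> exp ((real k+2)^2)" "2*(real k+1) \<le> exp ((real k+3)^2)" for k
  proof -
    have "1 + (real k+2)^2 \<le> exp ((real k+2)^2)" by (rule exp_ge_add_one_self)
    moreover have "2*(real k + 1) \<le> 1 + (real k+2)^2" by (simp add: power2_eq_square algebra_simps)
    ultimately show "2*(real k+1) \<le> exp ((real k+2)^2)" by linarith
    have "1 + (real k+3)^2 \<le> exp ((real k+3)^2)" by (rule exp_ge_add_one_self)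
    moreover have "2*(real k + 1) \<le> 1 + (real k+3)^2" by (simp add: power2_eq_square algebra_simps)
    ultimately show "2*(real k+1) \<le> exp ((real k+3)^2)" by linarith
  qed
  have lopos: "l (2*k+1) > 0" for k using expbig(2)[of k] lo[of k] by simp
  have \<beta>pos: "\<beta> k > 0" for k using b0 by (simp add: \<beta>_def add_nonneg_pos)
  have \<beta>1: "1/(real k+1) \<le> \<beta> k" for k using b0 by (simp add: \<beta>_def)
  have lowE: "exp y / (real k + 1) \<le> \<beta> k * exp y" for k y
    using mult_right_mono[OF \<beta>1[of k], of "exp y"] by simp
  have big: "2 \<le> \<beta> k * exp ((real k+2)^2)" for k
  proof -
    have "2 \<le> exp ((real k+2)^2) / (real k + 1)"
      using expbig(1)[of k] by (simp add: field_simps)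
    then show ?thesis using lowE[of "(real k+2)^2" k] by linarith
  qed
  have xe: "g (2*k) * l (2*k) = \<beta> k * exp ((real k+2)^2)" for k
    by (simp add: g_def le)
  have xo: "g (2*k+1) * l (2*k+1) = \<beta> k * exp ((real k+2)^2) + 1" for k
    using lopos[of k] by (simp add: g_def)
  have go: "g (2*k+1) = (\<beta> k * exp ((real k+2)^2) + 1) / (exp ((real k+3)^2) - (real k+1))" for k
    using lo[of k] by (simp add: g_def)
  have lpos: "l p > 0" for p
    by (cases p rule: parity_cases) (use lopos le in auto)
  have gpos: "g p > 0" for p
  proof (cases p rule: parity_cases)
    case (1 k)
    then show ?thesis using \<beta>pos[of k] by (simp add: g_def)
  next
    case (2 k)
    have "g (2*k+1) * l (2*k+1) > 0" unfolding xo using big[of k] by simp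
    then show ?thesis using 2 lpos[of "2*k+1"] by (simp add: zero_less_mult_iff)
  qed
  have A1: "(\<lambda>p. ereal (g (2*p+1))) \<longlonglongrightarrow> 0"
  proof -
    have "(\<lambda>k::nat. ((b0 + 1/(real k+1))*exp((real k+2)^2)+1)/(exp((real k+3)^2)-(real k+1))) \<longlonglongrightarrow> 0"
      by real_asymp
    then have "(\<lambda>p. g (2*p+1)) \<longlonglongrightarrow> 0" unfolding go \<beta>_def .
    then show ?thesis by (simp add: zero_ereal_def)
  qed
  have A2: "(\<lambda>p. ereal (g (2*p))) \<longlonglongrightarrow> ereal b0"
  proof -
    have "(\<lambda>k::nat. b0 + 1/(real k+1)) \<longlonglongrightarrow> b0 + 0"
      by (intro tendsto_add tendsto_const) real_asymp
    then show ?thesis by (simp add: g_def \<beta>_def)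
  qed
  have B: "filterlim (\<lambda>p. l (Suc p) - l p) at_top sequentially"
  proof (rule filterlim_at_top_mono)
    show "filterlim (\<lambda>p::nat. real p / 2) at_top sequentially" by real_asymp
    have "real p / 2 \<le> l (Suc p) - l p" for p
    proof (cases p rule: parity_cases)
      case (1 k)
      have "exp ((real k+3)^2) = exp ((real k+2)^2) * exp (2*real k + 5)"
        by (simp add: exp_add[symmetric] power2_eq_square algebra_simps)
      moreover have "2*real k + 6 \<le> exp (2*real k + 5)"
        using exp_ge_add_one_self[of "2*real k + 5"] by linarith
      moreover have E1: "1 \<le> exp ((real k+2)^2)" by simp
      moreover have "exp ((real k+2)^2) * (2*real k + 6) \<le> exp ((real k+2)^2) * exp (2*real k + 5)"
        using calculation(2) by (intro mult_left_mono) auto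
      ultimately have "exp ((real k+2)^2) * (2*real k + 6) \<le> exp ((real k+3)^2)"
        by simp
      then have "real k \<le> exp ((real k+3)^2) - (real k+1) - exp ((real k+2)^2)"
        using E1 by (intro gap) auto
      moreover have "l (Suc p) - l p = exp ((real k+3)^2) - (real k+1) - exp ((real k+2)^2)"
        using 1 le[of k] lo[of k] by simp
      moreover have "real p / 2 = real k" using 1 by simp
      ultimately show ?thesis by linarith
    next
      case (2 k)
      have S: "Suc p = 2*(Suc k)" using 2 by simp
      show ?thesis unfolding S using 2 le[of "Suc k"] lo[of k] by simp
    qed
    then show "\<forall>\<^sub>F p in sequentially. real p / 2 \<le> l (Suc p) - l p" by simp
  qed
  have D: "limsup (\<lambda>p. ereal (g (Suc p) * l (Suc p) / l p)) \<le> ereal b0"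
  proof -
    have "(\<lambda>p. g (Suc p) * l (Suc p) / l p) \<longlonglongrightarrow> b0"
    proof (rule my_limseq_even_odd)
      have "(\<lambda>k::nat. b0 + 1/(real k+1) + 1/exp((real k+2)^2)) \<longlonglongrightarrow> b0 + 0 + 0"
        by (intro tendsto_add tendsto_const) real_asymp+
      moreover have "g (Suc (2*k)) * l (Suc (2*k)) / l (2*k) = b0 + 1/(real k+1) + 1/exp((real k+2)^2)" for k
        using xo[of k] le[of k] by (simp add: \<beta>_def add_divide_distrib)
      ultimately show "(\<lambda>k. g (Suc (2*k)) * l (Suc (2*k)) / l (2*k)) \<longlonglongrightarrow> b0" by simp
      have "(\<lambda>k::nat. (b0 + 1/(real (Suc k)+1)) * (exp((real k+3)^2)/(exp((real k+3)^2)-(real k+1)))) \<longlonglongrightarrow> (b0 + 0) * 1"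
        by (intro tendsto_mult tendsto_add tendsto_const) real_asymp+
      moreover have "g (Suc (2*k+1)) * l (Suc (2*k+1)) / l (2*k+1) = (b0 + 1/(real (Suc k)+1)) * (exp((real k+3)^2)/(exp((real k+3)^2)-(real k+1)))" for k
      proof -
        have S: "Suc (2*k+1) = 2*Suc k" by simp
        show ?thesis unfolding S xe lo by (simp add: \<beta>_def)
      qed
      ultimately show "(\<lambda>k. g (Suc (2*k+1)) * l (Suc (2*k+1)) / l (2*k+1)) \<longlonglongrightarrow> b0" by simp
    qed
    then have "limsup (\<lambda>p. ereal (g (Suc p) * l (Suc p) / l p)) = ereal b0"
      by (intro lim_imp_Limsup) auto
    then show ?thesis by simp
  qed
  have E: "g p * l p + 1 \<le> g (Suc p) * l (Suc p)" for p
  proof (cases p rule: parity_cases)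
    case (1 k)
    have "Suc (2*k) = 2*k+1" by simp
    then show ?thesis using 1 xe[of k] xo[of k] by simp
  next
    case (2 k)
    have S: "Suc p = 2*(Suc k)" using 2 by simp
    have "exp ((real (Suc k)+2)^2) = exp ((real k+2)^2) * exp (2*real k + 5)"
      by (simp add: exp_add[symmetric] power2_eq_square algebra_simps)
    moreover have "4 \<le> exp (2*real k + 5)"
      using exp_ge_add_one_self[of "2*real k + 5"] by linarith
    ultimately have "4 * exp ((real k+2)^2) \<le> exp ((real (Suc k)+2)^2)"
      by simp
    moreover have "\<beta> k / 2 \<le> \<beta> (Suc k)"
    proof -
      have "1/(real k+1) \<le> 2 * (1/(real (Suc k)+1))" by (simp add: field_simps)
      then show ?thesis using b0 unfolding \<beta>_def by (rule half_le)
    qed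
    ultimately have "\<beta> k * exp ((real k+2)^2) + 2 \<le> \<beta> (Suc k) * exp ((real (Suc k)+2)^2)"
      by (intro step_ineq big \<beta>pos) auto
    moreover have "g (Suc p) * l (Suc p) = \<beta> (Suc k) * exp ((real (Suc k)+2)^2)"
      by (simp only: S xe)
    moreover have "g p * l p = \<beta> k * exp ((real k+2)^2) + 1" using 2 xo by simp
    ultimately show ?thesis by linarith
  qed
  have CF: "(\<lambda>p. l p / exp (g p * l p)) \<longlonglongrightarrow> 0 \<and> (\<forall>c::real. c \<ge> 0 \<longrightarrow>
       ((\<lambda>p. (c * real p + (\<Sum>j=1..p. l j)) / exp (g p * l p)) \<longlonglongrightarrow> 0))"
  proof (intro conjI allI impI)
    define U where "U = (\<lambda>p::nat. exp (((real p + 6)/2)^2))"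
    define V where "V = (\<lambda>p::nat. exp (((real p + 3)/2)^2) / (real p + 1))"
    have l0: "\<And>j. 1 \<le> j \<Longrightarrow> 0 \<le> l j" using lpos less_imp_le by blast
    have lUj: "l j \<le> U j" for j
    proof (cases j rule: parity_cases)
      case (1 k)
      have "(real k+2)^2 \<le> ((real j + 6)/2)^2" using 1 by (intro power_mono) auto
      then show ?thesis using 1 le[of k] by (simp add: U_def)
    next
      case (2 k)
      have "(real k+3)^2 \<le> ((real j + 6)/2)^2" using 2 by (intro power_mono) auto
      then have "exp ((real k+3)^2) \<le> U j" by (simp add: U_def)
      moreover have "l j \<le> exp ((real k+3)^2)" using 2 lo[of k] by simp
      ultimately show ?thesis by linarith
    qed
    have lU: "\<And>j p. 1 \<le> j \<Longrightarrow> j \<le> p \<Longrightarrow> l j \<le> U p"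
    proof -
      fix j p :: nat assume "1 \<le> j" "j \<le> p"
      have "((real j + 6)/2)^2 \<le> ((real p + 6)/2)^2" using \<open>j \<le> p\<close> by (intro power_mono) auto
      then have "U j \<le> U p" by (simp add: U_def)
      then show "l j \<le> U p" using lUj[of j] by linarith
    qed
    have Vx: "V p \<le> g p * l p" if "1 \<le> p" for p
    proof -
      obtain k where k: "p = 2*k \<or> p = 2*k+1" by (metis parity_cases)
      have "((real p + 3)/2)^2 \<le> (real k+2)^2" using k by (intro power_mono) auto
      then have "V p \<le> exp ((real k+2)^2) / (real k + 1)"
        unfolding V_def using k by (intro frac_le) auto
      also have "\<dots> \<le> \<beta> k * exp ((real k+2)^2)" by (rule lowE)
      also have "\<dots> \<le> g p * l p" using k xe[of k] xo[of k] by auto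
      finally show ?thesis .
    qed
    have lim: "\<And>c. c \<ge> 0 \<Longrightarrow> (\<lambda>p. (c*real p + real p * U p)/exp(V p)) \<longlonglongrightarrow> 0"
      unfolding U_def V_def by real_asymp
    show "(\<lambda>p. l p / exp (g p * l p)) \<longlonglongrightarrow> 0"
      by (rule cf_gen1[OF l0 lU Vx lim])
    fix c :: real assume c: "c \<ge> 0"
    show "(\<lambda>p. (c * real p + (\<Sum>j=1..p. l j)) / exp (g p * l p)) \<longlonglongrightarrow> 0"
      using cf_gen2[OF l0 lU Vx lim c] by simp
  qed
  have "good 0 (ereal b0) l g"
    unfolding good_def using lpos gpos A1 A2 B D E CF by simp
  then show ?thesis by blast
qed

lemma caseD:
  fixes a0 b0 :: real
  assumes a0: "0 < a0" and ab: "a0 \<le> b0"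
  shows "\<exists>l g. good (ereal a0) (ereal b0) l g"
proof -
  define r where "r = b0 / a0"
  have b0: "0 < b0" using a0 ab by linarith
  have r1: "1 \<le> r" using a0 ab by (simp add: r_def)
  have rpos: "0 < r" using r1 by linarith
  have ar: "a0 * r = b0" using a0 by (simp add: r_def)
  have R1: "1 \<le> r^k" for k using r1 by (simp add: one_le_power)
  have R2: "r^k \<le> r^(Suc k)" for k using r1 R1[of k] by simp
  define l where "l = (\<lambda>p::nat. if even p then r^(p div 2) * (2*(real (p div 2))^2+2) / b0
                                   else r^(Suc (p div 2)) * (2*(real (p div 2))^2 + 2*real (p div 2) + 3) / b0)"
  define g where "g = (\<lambda>p::nat. if even p then b0 else a0)"
  have le: "l (2*k) = r^k * (2*(real k)^2+2) / b0" for k by (simp add: l_def)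
  have lo: "l (2*k+1) = r^(Suc k) * (2*(real k)^2 + 2*real k + 3) / b0" for k by (simp add: l_def)
  have lo': "l (Suc (2*k)) = r^(Suc k) * (2*(real k)^2 + 2*real k + 3) / b0" for k using lo[of k] by simp
  have xe: "g (2*k) * l (2*k) = r^k * (2*(real k)^2+2)" for k using b0 by (simp add: g_def le)
  have xo: "g (2*k+1) * l (2*k+1) = r^k * (2*(real k)^2 + 2*real k + 3)" for k
  proof -
    have "g (2*k+1) * l (2*k+1) = (a0 * r) * r^k * (2*(real k)^2 + 2*real k + 3) / b0"
      by (simp add: g_def lo')
    also have "\<dots> = r^k * (2*(real k)^2 + 2*real k + 3)" using b0 by (simp add: ar)
    finally show ?thesis .
  qed
  have lpos: "l p > 0" for p
    using rpos b0 by (cases p rule: parity_cases) (auto simp: le lo' intro!: divide_pos_pos mult_pos_pos add_nonneg_pos)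
  have gpos: "g p > 0" for p using a0 b0 by (simp add: g_def)
  have pl: "real p \<le> b0 * l p" for p
  proof (cases p rule: parity_cases)
    case (1 k)
    have "1 * (2*(real k)^2+2) \<le> r^k * (2*(real k)^2+2)" using R1[of k] by (intro mult_right_mono) auto
    moreover have "2 * real k \<le> 2*(real k)^2+2"
    proof -
      have "0 \<le> (real k - 1)^2" by simp
      moreover have "(real k - 1)^2 = (real k)^2 - 2*real k + 1" by (simp add: power2_eq_square algebra_simps)
      moreover have "0 \<le> (real k)^2" by simp
      ultimately show ?thesis by linarith
    qed
    ultimately show ?thesis using 1 b0 by (simp add: le)
  next
    case (2 k)
    show ?thesis
    proof (rule le_aux[of _ "2*(real k)^2 + 2*real k + 3" "r^(Suc k)"])
      show "real p \<le> 2*(real k)^2 + 2*real k + 3" using 2 by simp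
      show "1 \<le> r^(Suc k)" by (rule R1)
      show "0 \<le> 2*(real k)^2 + 2*real k + 3" by simp
      show "b0 * l p = r^(Suc k) * (2*(real k)^2 + 2*real k + 3)" using 2 b0 lo'[of k] by simp
    qed
  qed
  have A1: "(\<lambda>p. ereal (g (2*p+1))) \<longlonglongrightarrow> ereal a0" by (simp add: g_def)
  have A2: "(\<lambda>p. ereal (g (2*p))) \<longlonglongrightarrow> ereal b0" by (simp add: g_def)
  have Bb: "1/b0 * real p \<le> l (Suc p) - l p" for p
  proof (cases p rule: parity_cases)
    case (1 k)
    have "r^k * (2*(real k)^2 + 2*real k + 3) \<le> r^(Suc k) * (2*(real k)^2 + 2*real k + 3)"
      using R2[of k] by (intro mult_right_mono) auto
    moreover have "2*real k+1 \<le> r^k * (2*real k+1)" by (rule le_aux[of _ "2*real k+1" "r^k"]) (use R1 in auto)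
    moreover have "r^k * (2*(real k)^2 + 2*real k + 3) = r^k * (2*(real k)^2+2) + r^k * (2*real k+1)"
      by (simp add: algebra_simps)
    moreover have "real p = 2*real k" using 1 by simp
    ultimately have "real p \<le> r^(Suc k) * (2*(real k)^2 + 2*real k + 3) - r^k * (2*(real k)^2+2)"
      by linarith
    then have "real p / b0 \<le> (r^(Suc k) * (2*(real k)^2 + 2*real k + 3) - r^k * (2*(real k)^2+2)) / b0"
      using b0 by (intro divide_right_mono) auto
    then show ?thesis using 1 by (simp add: le lo' diff_divide_distrib)
  next
    case (2 k)
    have S: "Suc p = 2 * Suc k" using 2 by simp
    have "2*real k+1 \<le> r^(Suc k) * (2*real k+1)" by (rule le_aux[of _ "2*real k+1" "r^(Suc k)"]) (use R1[of "Suc k"] in auto)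
    moreover have "r^(Suc k) * (2*(real (Suc k))^2+2) - r^(Suc k) * (2*(real k)^2 + 2*real k + 3) = r^(Suc k) * (2*real k+1)"
      by (simp add: algebra_simps power2_eq_square)
    moreover have "real p = 2*real k + 1" using 2 by simp
    ultimately have "real p \<le> r^(Suc k) * (2*(real (Suc k))^2+2) - r^(Suc k) * (2*(real k)^2 + 2*real k + 3)"
      by linarith
    then have "real p / b0 \<le> (r^(Suc k) * (2*(real (Suc k))^2+2) - r^(Suc k) * (2*(real k)^2 + 2*real k + 3)) / b0"
      using b0 by (intro divide_right_mono) auto
    also have "\<dots> = l (Suc p) - l p"
    proof -
      have "l (Suc p) = r^(Suc k) * (2*(real (Suc k))^2+2) / b0" unfolding S le ..
      moreover have "l p = r^(Suc k) * (2*(real k)^2 + 2*real k + 3) / b0" unfolding 2 lo ..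
      ultimately show ?thesis by (simp add: diff_divide_distrib)
    qed
    finally show ?thesis by simp
  qed
  have B: "filterlim (\<lambda>p. l (Suc p) - l p) at_top sequentially"
  proof (rule filterlim_at_top_mono)
    show "filterlim (\<lambda>p::nat. 1/b0 * real p) at_top sequentially"
      using b0 by (intro filterlim_tendsto_pos_mult_at_top[OF tendsto_const] filterlim_real_sequentially) auto
    show "\<forall>\<^sub>F p in sequentially. 1/b0 * real p \<le> l (Suc p) - l p" using Bb by simp
  qed
  have D: "limsup (\<lambda>p. ereal (g (Suc p) * l (Suc p) / l p)) \<le> ereal b0"
  proof -
    have "(\<lambda>p. g (Suc p) * l (Suc p) / l p) \<longlonglongrightarrow> b0"
    proof (rule my_limseq_even_odd)
      have "(\<lambda>k::nat. b0 * ((2*(real k)^2 + 2*real k + 3)/(2*(real k)^2+2))) \<longlonglongrightarrow> b0 * 1"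
        by (intro tendsto_mult tendsto_const) real_asymp
      moreover have "g (Suc (2*k)) * l (Suc (2*k)) / l (2*k) = b0 * ((2*(real k)^2 + 2*real k + 3)/(2*(real k)^2+2))" for k
      proof -
        have "g (Suc (2*k)) * l (Suc (2*k)) / l (2*k) = r^k * (2*(real k)^2 + 2*real k + 3) / (r^k * (2*(real k)^2+2) / b0)"
          using xo[of k] le[of k] by simp
        also have "\<dots> = b0 * ((2*(real k)^2 + 2*real k + 3)/(2*(real k)^2+2))"
        proof -
          have "r^k > 0" using rpos by simp
          moreover have "2*(real k)^2+2 > 0" by (simp add: add_nonneg_pos)
          ultimately show ?thesis using b0 rpos by (intro cancel_aux) auto
        qed
        finally show ?thesis .
      qed
      ultimately show "(\<lambda>k. g (Suc (2*k)) * l (Suc (2*k)) / l (2*k)) \<longlonglongrightarrow> b0" by simp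
      have "(\<lambda>k::nat. b0 * ((2*(real (Suc k))^2+2)/(2*(real k)^2 + 2*real k + 3))) \<longlonglongrightarrow> b0 * 1"
        by (intro tendsto_mult tendsto_const) real_asymp
      moreover have "g (Suc (2*k+1)) * l (Suc (2*k+1)) / l (2*k+1) = b0 * ((2*(real (Suc k))^2+2)/(2*(real k)^2 + 2*real k + 3))" for k
      proof -
        have S: "Suc (2*k+1) = 2*Suc k" by simp
        have "g (Suc (2*k+1)) * l (Suc (2*k+1)) / l (2*k+1) = r^(Suc k) * (2*(real (Suc k))^2+2) / (r^(Suc k) * (2*(real k)^2 + 2*real k + 3) / b0)"
          unfolding S xe lo by simp
        also have "\<dots> = b0 * ((2*(real (Suc k))^2+2)/(2*(real k)^2 + 2*real k + 3))"
        proof -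
          have "r^(Suc k) > 0" using rpos by simp
          moreover have "2*(real k)^2 + 2*real k + 3 > 0" by (simp add: add_nonneg_pos)
          ultimately show ?thesis using b0 rpos by (intro cancel_aux) auto
        qed
        finally show ?thesis .
      qed
      ultimately show "(\<lambda>k. g (Suc (2*k+1)) * l (Suc (2*k+1)) / l (2*k+1)) \<longlonglongrightarrow> b0" by simp
    qed
    then have "limsup (\<lambda>p. ereal (g (Suc p) * l (Suc p) / l p)) = ereal b0"
      by (intro lim_imp_Limsup) auto
    then show ?thesis by simp
  qed
  have E: "g p * l p + 1 \<le> g (Suc p) * l (Suc p)" for p
  proof (cases p rule: parity_cases)
    case (1 k)
    have "2*real k+1 \<le> r^k * (2*real k+1)" by (rule le_aux[of _ "2*real k+1" "r^k"]) (use R1 in auto)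
    moreover have "r^k * (2*(real k)^2 + 2*real k + 3) = r^k * (2*(real k)^2+2) + r^k * (2*real k+1)"
      by (simp add: algebra_simps)
    moreover have "g p * l p = r^k * (2*(real k)^2+2)" using 1 xe[of k] by simp
    moreover have "g (Suc p) * l (Suc p) = r^k * (2*(real k)^2 + 2*real k + 3)" using 1 xo[of k] by simp
    moreover have "1 \<le> 2*real k + 1" by simp
    ultimately show ?thesis by linarith
  next
    case (2 k)
    have S: "Suc p = 2 * Suc k" using 2 by simp
    have "r^k * (2*(real (Suc k))^2+2) \<le> r^(Suc k) * (2*(real (Suc k))^2+2)"
      using R2[of k] by (intro mult_right_mono) auto
    moreover have "2*real k+1 \<le> r^k * (2*real k+1)" by (rule le_aux[of _ "2*real k+1" "r^k"]) (use R1 in auto)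
    moreover have "r^k * (2*(real (Suc k))^2+2) = r^k * (2*(real k)^2 + 2*real k + 3) + r^k * (2*real k+1)"
      by (simp add: algebra_simps power2_eq_square)
    moreover have "g (Suc p) * l (Suc p) = r^(Suc k) * (2*(real (Suc k))^2+2)"
      by (simp only: S xe)
    moreover have "g p * l p = r^k * (2*(real k)^2 + 2*real k + 3)" using 2 xo by simp
    moreover have "1 \<le> 2*real k + 1" by simp
    ultimately show ?thesis by linarith
  qed
  have CF: "(\<lambda>p. l p / exp (g p * l p)) \<longlonglongrightarrow> 0 \<and> (\<forall>c::real. c \<ge> 0 \<longrightarrow>
       ((\<lambda>p. (c * real p + (\<Sum>j=1..p. l j)) / exp (g p * l p)) \<longlonglongrightarrow> 0))"
  proof (intro conjI allI impI)
    have l0: "\<And>j. 1 \<le> j \<Longrightarrow> 0 \<le> l j" using lpos less_imp_le by blast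
    have inc: "incseq l"
    proof (rule incseq_SucI)
      fix p
      have "0 \<le> 1/b0 * real p" using b0 by simp
      then show "l p \<le> l (Suc p)" using Bb[of p] by linarith
    qed
    have lU: "\<And>j p. 1 \<le> j \<Longrightarrow> j \<le> p \<Longrightarrow> l j \<le> l p"
      using inc by (simp add: incseq_def)
    have Vx: "a0 * l p \<le> g p * l p" if "1 \<le> p" for p
      using ab lpos[of p] by (intro mult_right_mono) (auto simp: g_def less_imp_le)
    have lim: "(\<lambda>p. (c*real p + real p * l p)/exp(a0 * l p)) \<longlonglongrightarrow> 0" if c: "c \<ge> 0" for c
    proof -
      define h where "h = (\<lambda>s::real. (a0 * c + s) * s / exp s)"
      have h0: "(h \<longlongrightarrow> 0) at_top" unfolding h_def by real_asymp
      have lt: "filterlim (\<lambda>p. a0 * l p) at_top sequentially"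
      proof (rule filterlim_tendsto_pos_mult_at_top[OF tendsto_const a0])
        show "filterlim l at_top sequentially"
        proof (rule filterlim_at_top_mono)
          show "filterlim (\<lambda>p::nat. 1/b0 * real p) at_top sequentially"
            using b0 by (intro filterlim_tendsto_pos_mult_at_top[OF tendsto_const] filterlim_real_sequentially) auto
          have "1/b0 * real p \<le> l p" for p using pl[of p] b0 by (simp add: field_simps)
          then show "\<forall>\<^sub>F p in sequentially. 1/b0 * real p \<le> l p" by simp
        qed
      qed
      have "(\<lambda>p. b0/a0^2 * h (a0 * l p)) \<longlonglongrightarrow> b0/a0^2 * 0"
        by (intro tendsto_mult tendsto_const filterlim_compose[OF h0 lt])
      then have L: "(\<lambda>p. b0/a0^2 * h (a0 * l p)) \<longlonglongrightarrow> 0" by simp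
      show ?thesis
      proof (rule tendsto_sandwich[OF _ _ tendsto_const L])
        have "0 \<le> (c*real p + real p * l p)/exp(a0 * l p)" for p
          using c lpos[of p] by (intro divide_nonneg_pos add_nonneg_nonneg mult_nonneg_nonneg) (auto simp: less_imp_le)
        then show "\<forall>\<^sub>F p in sequentially. 0 \<le> (c*real p + real p * l p)/exp(a0 * l p)" by simp
        have "(c*real p + real p * l p)/exp(a0 * l p) \<le> b0/a0^2 * h (a0 * l p)" for p
        proof -
          have "c*real p + real p * l p = real p * (c + l p)" by (simp add: algebra_simps)
          also have "\<dots> \<le> (b0 * l p) * (c + l p)"
            using pl[of p] c lpos[of p] by (intro mult_right_mono) auto
          also have "\<dots> = b0/a0^2 * ((a0 * c + a0 * l p) * (a0 * l p))"
            using a0 by (simp add: field_simps power2_eq_square)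
          finally have "(c*real p + real p * l p)/exp(a0 * l p) \<le> b0/a0^2 * ((a0 * c + a0 * l p) * (a0 * l p)) / exp(a0 * l p)"
            by (intro divide_right_mono) auto
          then show ?thesis by (simp add: h_def)
        qed
        then show "\<forall>\<^sub>F p in sequentially. (c*real p + real p * l p)/exp(a0 * l p) \<le> b0/a0^2 * h (a0 * l p)" by simp
      qed
    qed
    show "(\<lambda>p. l p / exp (g p * l p)) \<longlonglongrightarrow> 0"
      by (rule cf_gen1[OF l0 lU Vx lim])
    fix c :: real assume c: "c \<ge> 0"
    show "(\<lambda>p. (c * real p + (\<Sum>j=1..p. l j)) / exp (g p * l p)) \<longlonglongrightarrow> 0"
      using cf_gen2[OF l0 lU Vx lim c] by simp
  qed
  have "good (ereal a0) (ereal b0) l g"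
    unfolding good_def using lpos gpos A1 A2 B D E CF by simp
  then show ?thesis by blast
qed

theorem lemma2p4:
  fixes a b :: ereal
  assumes "0 \<le> a" and "a \<le> b"
  shows "\<exists>(l::nat \<Rightarrow> real) (g::nat \<Rightarrow> real).
    (\<forall>p\<ge>1. l p > 0 \<and> g p > 0) \<and>
    ((\<lambda>p. ereal (g (2*p+1))) \<longlonglongrightarrow> a) \<and>
    ((\<lambda>p. ereal (g (2*p))) \<longlonglongrightarrow> b) \<and>
    filterlim (\<lambda>p. l (Suc p) - l p) at_top sequentially \<and>
    ((\<lambda>p. l p / exp (g p * l p)) \<longlonglongrightarrow> 0) \<and>
    limsup (\<lambda>p. ereal (g (Suc p) * l (Suc p) / l p)) \<le> b \<and>
    (\<forall>p\<ge>1. g p * l p + 1 \<le> g (Suc p) * l (Suc p)) \<and>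
    (\<forall>c::real. c \<ge> 0 \<longrightarrow>
       ((\<lambda>p. (c * real p + (\<Sum>j=1..p. l j)) / exp (g p * l p)) \<longlonglongrightarrow> 0))"
proof -
  have "\<exists>l g. good a b l g"
  proof (cases "b = \<infinity>")
    case True
    show ?thesis
    proof (cases "a = \<infinity>")
      case True
      have "\<exists>l g. good a \<infinity> l g"
      proof (rule caseAB[of "\<lambda>k. real k + 1"])
        show "1 / (real k + 1) \<le> real k + 1" for k by (simp add: field_simps)
        show "(real k + 1) / 2 \<le> real (Suc k) + 1" for k by simp
        have "filterlim (\<lambda>k::nat. real k + 1) at_top sequentially" by real_asymp
        then show "(\<lambda>k. ereal (real k + 1)) \<longlonglongrightarrow> a"
          unfolding True tendsto_PInfty_eq_at_top .
      qed
      then show ?thesis using \<open>b = \<infinity>\<close> by simp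
    next
      case False
      obtain a0 where a0: "a = ereal a0" using False assms(1) by (cases a) auto
      have a00: "0 \<le> a0" using assms(1) a0 by simp
      have "\<exists>l g. good a \<infinity> l g"
      proof (rule caseAB[of "\<lambda>k. a0 + 1/(real k + 1)"])
        show "1 / (real k + 1) \<le> a0 + 1/(real k + 1)" for k using a00 by simp
        show "(a0 + 1/(real k + 1)) / 2 \<le> a0 + 1/(real (Suc k) + 1)" for k
          by (rule half_le) (auto simp: field_simps a00)
        have "(\<lambda>k::nat. a0 + 1/(real k + 1)) \<longlonglongrightarrow> a0 + 0"
          by (intro tendsto_add tendsto_const) real_asymp
        then show "(\<lambda>k. ereal (a0 + 1/(real k + 1))) \<longlonglongrightarrow> a"
          unfolding a0 by simp
      qed
      then show ?thesis using \<open>b = \<infinity>\<close> by simp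
    qed
  next
    case False
    obtain b0 where b0: "b = ereal b0" using False assms by (cases b) auto
    obtain a0 where a0: "a = ereal a0" using assms b0 by (cases a) auto
    have a00: "0 \<le> a0" and ab: "a0 \<le> b0" using assms a0 b0 by auto
    show ?thesis
    proof (cases "a0 = 0")
      case True
      have "\<exists>l g. good 0 (ereal b0) l g" using a00 ab True by (intro caseC) auto
      then show ?thesis using a0 b0 True by (simp add: zero_ereal_def)
    next
      case False
      have "\<exists>l g. good (ereal a0) (ereal b0) l g" using a00 ab False by (intro caseD) auto
      then show ?thesis using a0 b0 by simp
    qed
  qed
  then show ?thesis unfolding good_def .
qed

end
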